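(* Let $c\in\mathcal C^1([0,1])$ with $c>0$, $\alpha>0$, and let $(\bar u,\bar v)$ be a $\mathcal C^1$ stationary solution of system (S) satisfying either (PBC) with $\bar u,\bar v>0$ on $[0,1]$, or (DBC) with $m\le\bar u(x)/x\le M$ and $m\le\bar v(x)/(1-x)\le M$ for $x\in(0,1)$ and constants $0<m\le M$. Let $(u,v)$ be a classical ($\mathcal C^1$) nonnegative solution of system (S) with the same boundary conditions, such that in case (DBC) $u(x,t)\le Kx$ and $v(x,t)\le K(1-x)$ for some constant $K$. Then $$\frac{d}{dt}\mathcal H[u,v]=-\frac{\alpha}{2}\int_0^1\frac{c\,J(u,v,\bar u,\bar v)}{(1+u+v)(1+\bar u+\bar v)}\,dx.$$
   Context: System (S): $\partial_t u+\partial_x(c(x)u)=\frac{\alpha v}{1+u+v}-u$, $\partial_t v-\partial_x(c(x)v)=\frac{\alpha u}{1+u+v}-v$ on $x\in[0,1]$; (DBC): $u(0,t)=0$, $v(1,t)=0$; (PBC): $u(0,t)=u(1,t)$, $v(0,t)=v(1,t)$, $c$ periodic. Lyapunov functional: $\mathcal H[u,v]=\frac12\int_0^1c\Big(\frac{\bar v}{\bar u}(u-\bar u)^2+\frac{\bar u}{\bar v}(v-\bar v)^2\Big)dx$ (for (DBC) the integrand is extended continuously by $0$ at $x=0,1$). $J(u,v,\bar u,\bar v)=\hat u^2[(1+u+v)(\bar u^2+\bar v^2)+2\bar v^2\bar u]+\hat v^2[(1+u+v)(\bar u^2+\bar v^2)+2\bar u^2\bar v]-2\hat u\hat v(\bar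 u^2+\bar v^2+\bar u^2\bar v+\bar u\bar v^2)$ with $\hat u=(u-\bar u)/\bar u$, $\hat v=(v-\bar v)/\bar v$. *)

theory Defs
  imports "HOL-Analysis.Analysis"
begin

definition Jfun :: "real \<Rightarrow> real \<Rightarrow> real \<Rightarrow> real \<Rightarrow> real" where
  "Jfun u v ub vb =
     (let uh = (u - ub) / ub; vh = (v - vb) / vb in
        uh\<^sup>2 * ((1 + u + v) * (ub\<^sup>2 + vb\<^sup>2) + 2 * vb\<^sup>2 * ub)
      + vh\<^sup>2 * ((1 + u + v) * (ub\<^sup>2 + vb\<^sup>2) + 2 * ub\<^sup>2 * vb)
      - 2 * uh * vh * (ub\<^sup>2 + vb\<^sup>2 + ub\<^sup>2 * vb + ub * vb\<^sup>2))"

text \<open>At points where ub or vb vanish (only x = 0, 1 in the Dirichlet case) HOL's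
  convention x/0 = 0 makes the integrand 0, which is the continuous extension
  used in the paper; in any case endpoints do not affect the integral.\<close>
definition Hfun :: "(real \<Rightarrow> real) \<Rightarrow> (real \<Rightarrow> real) \<Rightarrow> (real \<Rightarrow> real)
                      \<Rightarrow> (real \<Rightarrow> real) \<Rightarrow> (real \<Rightarrow> real) \<Rightarrow> real" where
  "Hfun c ub vb U V =
     (1/2) * integral {0..1}
       (\<lambda>x. c x * (vb x / ub x * (U x - ub x)\<^sup>2 + ub x / vb x * (V x - vb x)\<^sup>2))"

end

theory Submission imports Defs begin

lemma deriv_bound_interval:
  fixes f f' :: "real \<Rightarrow> real"
  assumes "a \<le> b" "\<And>y. y \<in> {a..b} \<Longrightarrow> (f has_real_derivative f' y) (at y)"
    "\<And>y. y \<in> {a..b} \<Longrightarrow> \<bar>f' y\<bar> \<le> B"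
  shows "\<bar>f b - f a\<bar> \<le> B * (b - a)"
proof (cases "a = b")
  case True then show ?thesis by simp
next
  case False
  with assms(1) have "a < b" by simp
  from MVT2[OF this, of f f'] assms(2) obtain z where z: "a < z" "z < b" "f b - f a = (b - a) * f' z"
    by auto
  have "\<bar>f' z\<bar> \<le> B" using assms(3) z by auto
  then show ?thesis using z \<open>a<b\<close>
    by (simp add: abs_mult mult.commute mult_right_mono)
qed

lemma joint_cont:
  fixes u ut :: "real \<Rightarrow> real \<Rightarrow> real"
  assumes dt: "\<forall>x\<in>{0..1}. \<forall>t>0. ((\<lambda>s. u x s) has_real_derivative ut x t) (at t)"
    and utc: "continuous_on ({0..1} \<times> {0<..}) (\<lambda>(x,t). ut x t)"
    and xc: "\<And>t. t > 0 \<Longrightarrow> continuous_on {0..1} (\<lambda>x. u x t)"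
  shows "continuous_on ({0..1} \<times> {0<..}) (\<lambda>(x,t). u x t)"
  unfolding continuous_on_iff
proof (intro ballI allI impI)
  fix p :: "real \<times> real" and e :: real
  assume p: "p \<in> {0..1} \<times> {0<..}" and e: "e > 0"
  obtain x0 t0 where p0: "p = (x0, t0)" by (cases p)
  with p have x0: "x0 \<in> {0..1}" and t0: "t0 > 0" by auto
  let ?C = "{0..1::real} \<times> {t0/2..2*t0}"
  have "compact ?C" by (intro compact_Times compact_Icc)
  moreover have "?C \<subseteq> {0..1} \<times> {0<..}" using t0 by auto
  ultimately have "compact ((\<lambda>(x,t). ut x t) ` ?C)"
    by (intro compact_continuous_image continuous_on_subset[OF utc])
  then have "bounded ((\<lambda>(x,t). ut x t) ` ?C)" by (rule compact_imp_bounded)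
  then obtain B where B0: "B > 0" "\<forall>y\<in>(\<lambda>(x,t). ut x t) ` ?C. norm y \<le> B"
    unfolding bounded_pos by auto
  have B: "B > 0" "\<And>q. q \<in> ?C \<Longrightarrow> norm ((\<lambda>(x,t). ut x t) q) \<le> B"
    using B0 by auto
  have Bx: "\<bar>ut x s\<bar> \<le> B" if "x \<in> {0..1}" "s \<in> {t0/2..2*t0}" for x s
    using B(2)[of "(x,s)"] that by auto
  from xc[OF t0] x0 e obtain d1 where d1: "d1 > 0"
    "\<And>x. x \<in> {0..1} \<Longrightarrow> dist x x0 < d1 \<Longrightarrow> dist (u x t0) (u x0 t0) < e/2"
    unfolding continuous_on_iff by (metis half_gt_zero)
  define d where "d = min d1 (min (t0/2) (e/(2*B)))"
  have d: "d > 0" using d1 t0 e B by (simp add: d_def)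
  show "\<exists>d>0. \<forall>x'\<in>{0..1} \<times> {0<..}. dist x' p < d \<longrightarrow>
          dist ((\<lambda>(x, t). u x t) x') ((\<lambda>(x, t). u x t) p) < e"
  proof (intro exI[of _ d] conjI ballI impI d)
    fix q assume q: "q \<in> {0..1} \<times> {0<..}" and dq: "dist q p < d"
    obtain x s where q0: "q = (x, s)" by (cases q)
    with q have x: "x \<in> {0..1}" and s: "s > 0" by auto
    have dx: "dist x x0 < d" using dist_fst_le[of q p] dq q0 p0 by simp
    have ds: "dist s t0 < d" using dist_snd_le[of q p] dq q0 p0 by simp
    have e1: "dist (u x t0) (u x0 t0) < e/2" using d1(2)[OF x] dx by (simp add: d_def)
    have "\<bar>s - t0\<bar> < t0/2" using ds by (simp add: d_def dist_real_def)
    then have sI: "s \<in> {t0/2..2*t0}" by (auto simp: abs_if split: if_splits)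
    have e2: "\<bar>u x s - u x t0\<bar> \<le> B * \<bar>s - t0\<bar>"
    proof -
      have der: "((\<lambda>s. u x s) has_real_derivative ut x y) (at y)" if "y \<in> {min s t0..max s t0}" for y
        using dt x that s t0 by auto
      have bd: "\<bar>ut x y\<bar> \<le> B" if "y \<in> {min s t0..max s t0}" for y
      proof (rule Bx[OF x])
        show "y \<in> {t0/2..2*t0}" using that sI t0 by (auto simp: min_def max_def split: if_splits)
      qed
      have "\<bar>u x (max s t0) - u x (min s t0)\<bar> \<le> B * (max s t0 - min s t0)"
        by (rule deriv_bound_interval[OF _ der bd]) auto
      then show ?thesis by (cases "s \<le> t0") (auto simp: abs_minus_commute)
    qed
    have "B * \<bar>s - t0\<bar> < B * (e/(2*B))"
      using ds B by (intro mult_strict_left_mono) (auto simp: d_def dist_real_def)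
    also have "\<dots> = e/2" using B by simp
    finally have "\<bar>u x s - u x t0\<bar> < e/2" using e2 by linarith
    moreover have "\<bar>u x t0 - u x0 t0\<bar> < e/2" using e1 by (simp add: dist_real_def)
    ultimately have "\<bar>u x s - u x0 t0\<bar> < e" by arith
    then show "dist ((\<lambda>(x, t). u x t) q) ((\<lambda>(x, t). u x t) p) < e"
      using q0 p0 by (simp add: dist_real_def)
  qed
qed

lemma cont_on_squeeze:
  fixes F H :: "'a::t2_space \<Rightarrow> real"
  assumes "open Op" "Op \<subseteq> T" "continuous_on Op F" "continuous_on T H"
    "\<And>y. y \<in> T \<Longrightarrow> \<bar>F y\<bar> \<le> H y"
    "\<And>y. y \<in> T \<Longrightarrow> y \<notin> Op \<Longrightarrow> F y = 0 \<and> H y = 0"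
  shows "continuous_on T F"
proof (rule continuous_on_eq_continuous_within[THEN iffD2], intro ballI)
  fix y assume y: "y \<in> T"
  show "continuous (at y within T) F"
  proof (cases "y \<in> Op")
    case True
    then have "isCont F y" using assms(1,3) continuous_on_eq_continuous_at by blast
    then show ?thesis by (rule continuous_at_imp_continuous_within)
  next
    case False
    with assms(6)[OF y] have F0: "F y = 0" and H0: "H y = 0" by auto
    have "(H \<longlongrightarrow> 0) (at y within T)"
      using assms(4) y H0 unfolding continuous_on_def by auto
    moreover have "eventually (\<lambda>z. norm (F z) \<le> H z) (at y within T)"
      using assms(5) by (auto simp: eventually_at_filter)
    ultimately have "(F \<longlongrightarrow> 0) (at y within T)" using Lim_null_comparison by blast
    then show ?thesis using F0 unfolding continuous_within by simp
  qed
qed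

definition Eg :: "real \<Rightarrow> real \<Rightarrow> real \<Rightarrow> real \<Rightarrow> real \<Rightarrow> real \<Rightarrow> real \<Rightarrow> real \<Rightarrow> real \<Rightarrow> real \<Rightarrow> real" where
 "Eg c c' ub ub' vb vb' u ux v vx =
   c * c' * (ub / vb * (v - vb)^2 - vb / ub * (u - ub)^2)
   + c * c / 2 * ((ub' * vb - ub * vb') / vb^2 * (v - vb)^2 + ub / vb * (2 * (v - vb) * (vx - vb'))
        - ((vb' * ub - vb * ub') / ub^2 * (u - ub)^2 + vb / ub * (2 * (u - ub) * (ux - ub'))))"

lemma alg:
  fixes c c' ub ub' vb vb' u ux ut v vx vt \<alpha> :: real
  assumes c: "c \<noteq> 0" and ub: "ub \<noteq> 0" and vb: "vb \<noteq> 0"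
    and S: "1 + u + v \<noteq> 0" and Sb: "1 + ub + vb \<noteq> 0"
    and su: "c' * ub + c * ub' = \<alpha> * vb / (1 + ub + vb) - ub"
    and sv: "- (c' * vb + c * vb') = \<alpha> * ub / (1 + ub + vb) - vb"
    and eu: "ut + (c' * u + c * ux) = \<alpha> * v / (1 + u + v) - u"
    and ev: "vt - (c' * v + c * vx) = \<alpha> * u / (1 + u + v) - v"
  shows "c * (vb / ub * (u - ub) * ut + ub / vb * (v - vb) * vt)
         + (\<alpha> / 2) * (c * Jfun u v ub vb / ((1 + u + v) * (1 + ub + vb)))
         = Eg c c' ub ub' vb vb' u ux v vx"
proof -
  have ub': "ub' = (\<alpha> * vb / (1 + ub + vb) - ub - c' * ub) / c" using su c by (simp add: field_simps)
  have vb': "vb' = (vb - \<alpha> * ub / (1 + ub + vb) - c' * vb) / c" using sv c by (simp add: field_simps)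
  have ut: "ut = \<alpha> * v / (1 + u + v) - u - (c' * u + c * ux)" using eu by simp
  have vt: "vt = \<alpha> * u / (1 + u + v) - v + (c' * v + c * vx)" using ev by simp
  show ?thesis unfolding ub' vb' ut vt Eg_def Jfun_def Let_def
    using c ub vb S Sb by (simp add: divide_simps power2_eq_square) algebra
qed


lemma G_deriv:
  fixes C UB VB U V :: "real \<Rightarrow> real"
  assumes "(C has_real_derivative C') (at x)" "(UB has_real_derivative UB') (at x)"
    "(VB has_real_derivative VB') (at x)" "(U has_real_derivative U') (at x)"
    "(V has_real_derivative V') (at x)" "UB x \<noteq> 0" "VB x \<noteq> 0"
  shows "((\<lambda>y. C y * C y / 2 * (UB y / VB y * (V y - VB y)^2 - VB y / UB y * (U y - UB y)^2))
     has_real_derivative Eg (C x) C' (UB x) UB' (VB x) VB' (U x) U' (V x) V') (at x)"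
proof -
  note dC = assms(1) and dUB = assms(2) and dVB = assms(3) and dU = assms(4) and dV = assms(5)
  have dq1: "((\<lambda>y. UB y / VB y) has_real_derivative (UB' * VB x - UB x * VB') / (VB x * VB x)) (at x)"
    by (rule DERIV_divide[OF dUB dVB assms(7)])
  have dq2: "((\<lambda>y. VB y / UB y) has_real_derivative (VB' * UB x - VB x * UB') / (UB x * UB x)) (at x)"
    by (rule DERIV_divide[OF dVB dUB assms(6)])
  have ds1: "((\<lambda>y. (V y - VB y)^2) has_real_derivative of_nat 2 * ((V' - VB') * (V x - VB x) ^ (2 - Suc 0))) (at x)"
    by (rule DERIV_power[OF DERIV_diff[OF dV dVB]])
  have ds2: "((\<lambda>y. (U y - UB y)^2) has_real_derivative of_nat 2 * ((U' - UB') * (U x - UB x) ^ (2 - Suc 0))) (at x)"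
    by (rule DERIV_power[OF DERIV_diff[OF dU dUB]])
  have dcc: "((\<lambda>y. C y * C y / 2) has_real_derivative (C' * C x + C' * C x) / 2) (at x)"
    using DERIV_cdivide[OF DERIV_mult[OF dC dC], of 2] by simp
  have all: "((\<lambda>y. C y * C y / 2 * (UB y / VB y * (V y - VB y)^2 - VB y / UB y * (U y - UB y)^2))
     has_real_derivative
      ((C' * C x + C' * C x) / 2 * (UB x / VB x * (V x - VB x)^2 - VB x / UB x * (U x - UB x)^2)
       + (((UB' * VB x - UB x * VB') / (VB x * VB x) * (V x - VB x)^2
            + of_nat 2 * ((V' - VB') * (V x - VB x) ^ (2 - Suc 0)) * (UB x / VB x))
         - ((VB' * UB x - VB x * UB') / (UB x * UB x) * (U x - UB x)^2
            + of_nat 2 * ((U' - UB') * (U x - UB x) ^ (2 - Suc 0)) * (VB x / UB x))) * (C x * C x / 2))) (at x)"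
    by (rule DERIV_mult[OF dcc DERIV_diff[OF DERIV_mult[OF dq1 ds1] DERIV_mult[OF dq2 ds2]]])
  show ?thesis
    apply (rule DERIV_cong[OF all])
    using assms(6,7) by (simp add: Eg_def field_simps power2_eq_square)
qed

theorem mainTheorem10:
  fixes c c' ub ub' vb vb' :: "real \<Rightarrow> real"
    and u ux ut v vx vt :: "real \<Rightarrow> real \<Rightarrow> real"
    and \<alpha> :: real
  assumes alpha_pos: "\<alpha> > 0"
    \<comment> \<open>c is C^1 on [0,1] and positive\<close>
    and c_deriv: "\<forall>x\<in>{0..1}. (c has_real_derivative c' x) (at x within {0..1})"
    and c'_cont: "continuous_on {0..1} c'"
    and c_pos: "\<forall>x\<in>{0..1}. c x > 0"
    \<comment> \<open>(ub,vb) is a C^1 stationary solution of (S)\<close>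
    and ub_deriv: "\<forall>x\<in>{0..1}. (ub has_real_derivative ub' x) (at x within {0..1})"
    and vb_deriv: "\<forall>x\<in>{0..1}. (vb has_real_derivative vb' x) (at x within {0..1})"
    and ub'_cont: "continuous_on {0..1} ub'"
    and vb'_cont: "continuous_on {0..1} vb'"
    and stat_u: "\<forall>x\<in>{0..1}. c' x * ub x + c x * ub' x
                   = \<alpha> * vb x / (1 + ub x + vb x) - ub x"
    and stat_v: "\<forall>x\<in>{0..1}. - (c' x * vb x + c x * vb' x)
                   = \<alpha> * ub x / (1 + ub x + vb x) - vb x"
    \<comment> \<open>(u,v) is a classical (C^1 in (x,t)) nonnegative solution of (S) for t > 0\<close>
    and u_dx: "\<forall>x\<in>{0..1}. \<forall>t>0. ((\<lambda>y. u y t) has_real_derivative ux x t) (at x within {0..1})"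
    and u_dt: "\<forall>x\<in>{0..1}. \<forall>t>0. ((\<lambda>s. u x s) has_real_derivative ut x t) (at t)"
    and v_dx: "\<forall>x\<in>{0..1}. \<forall>t>0. ((\<lambda>y. v y t) has_real_derivative vx x t) (at x within {0..1})"
    and v_dt: "\<forall>x\<in>{0..1}. \<forall>t>0. ((\<lambda>s. v x s) has_real_derivative vt x t) (at t)"
    and ux_cont: "continuous_on ({0..1} \<times> {0<..}) (\<lambda>(x, t). ux x t)"
    and ut_cont: "continuous_on ({0..1} \<times> {0<..}) (\<lambda>(x, t). ut x t)"
    and vx_cont: "continuous_on ({0..1} \<times> {0<..}) (\<lambda>(x, t). vx x t)"
    and vt_cont: "continuous_on ({0..1} \<times> {0<..}) (\<lambda>(x, t). vt x t)"
    and eq_u: "\<forall>x\<in>{0..1}. \<forall>t>0. ut x t + (c' x * u x t + c x * ux x t)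
                   = \<alpha> * v x t / (1 + u x t + v x t) - u x t"
    and eq_v: "\<forall>x\<in>{0..1}. \<forall>t>0. vt x t - (c' x * v x t + c x * vx x t)
                   = \<alpha> * u x t / (1 + u x t + v x t) - v x t"
    and nonneg: "\<forall>x\<in>{0..1}. \<forall>t>0. u x t \<ge> 0 \<and> v x t \<ge> 0"
    \<comment> \<open>boundary conditions: either (PBC) or (DBC)\<close>
    and bc:
      "(c 0 = c 1 \<and> ub 0 = ub 1 \<and> vb 0 = vb 1
         \<and> (\<forall>x\<in>{0..1}. ub x > 0 \<and> vb x > 0)
         \<and> (\<forall>t>0. u 0 t = u 1 t \<and> v 0 t = v 1 t))
       \<or>
       (ub 0 = 0 \<and> vb 1 = 0
         \<and> (\<exists>m M. 0 < m \<and> m \<le> M \<and>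
              (\<forall>x\<in>{0<..<1}. m \<le> ub x / x \<and> ub x / x \<le> M
                             \<and> m \<le> vb x / (1 - x) \<and> vb x / (1 - x) \<le> M))
         \<and> (\<forall>t>0. u 0 t = 0 \<and> v 1 t = 0)
         \<and> (\<exists>K. \<forall>x\<in>{0..1}. \<forall>t>0. u x t \<le> K * x \<and> v x t \<le> K * (1 - x)))"
  shows "\<forall>t>0. ((\<lambda>s. Hfun c ub vb (\<lambda>x. u x s) (\<lambda>x. v x s)) has_real_derivative
            (- (\<alpha> / 2) * integral {0..1}
                 (\<lambda>x. c x * Jfun (u x t) (v x t) (ub x) (vb x)
                       / ((1 + u x t + v x t) * (1 + ub x + vb x))))) (at t)"
  proof (intro allI impI)
  fix t :: real
  assume t: "t > 0"
  define U where "U = {t/2<..<2*t}"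
  have U_pos: "\<And>s. s \<in> U \<Longrightarrow> s > 0" using t by (auto simp: U_def)
  have tU: "t \<in> U" using t by (simp add: U_def)
  have openU: "open U" by (simp add: U_def)
  have convU: "convex U" by (simp add: U_def)

  have c_cont: "continuous_on {0..1} c"
    using c_deriv DERIV_continuous continuous_on_eq_continuous_within by blast
  have ub_cont: "continuous_on {0..1} ub"
    using ub_deriv DERIV_continuous continuous_on_eq_continuous_within by blast
  have vb_cont: "continuous_on {0..1} vb"
    using vb_deriv DERIV_continuous continuous_on_eq_continuous_within by blast
  have ux_c: "continuous_on {0..1} (\<lambda>x. u x s)" if "s > 0" for s
    using u_dx that DERIV_continuous continuous_on_eq_continuous_within by blast
  have vx_c: "continuous_on {0..1} (\<lambda>x. v x s)" if "s > 0" for s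
    using v_dx that DERIV_continuous continuous_on_eq_continuous_within by blast
  have uC: "continuous_on ({0..1} \<times> {0<..}) (\<lambda>(x,t). u x t)"
    by (rule joint_cont[OF u_dt ut_cont ux_c])
  have vC: "continuous_on ({0..1} \<times> {0<..}) (\<lambda>(x,t). v x t)"
    by (rule joint_cont[OF v_dt vt_cont vx_c])
  have pairify: "continuous_on (U \<times> {0..1}) (\<lambda>p. w (snd p) (fst p))"
    if "continuous_on ({0..1} \<times> {0<..}) (\<lambda>(x,t). w x t)" for w :: "real \<Rightarrow> real \<Rightarrow> real"
  proof -
    have "continuous_on (U \<times> {0..1}) (\<lambda>p. (\<lambda>(x,t). w x t) (snd p, fst p))"
      by (rule continuous_on_compose2[OF that]) (auto intro!: continuous_intros dest: U_pos)
    then show ?thesis by simp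
  qed
  have sndify: "continuous_on (U \<times> {0..1}) (\<lambda>p. w (snd p))"
    if "continuous_on {0..1} w" for w :: "real \<Rightarrow> real"
    by (rule continuous_on_compose2[OF that]) (auto intro!: continuous_intros)
  note cP = sndify[OF c_cont] and ubP = sndify[OF ub_cont] and vbP = sndify[OF vb_cont]
  note uP = pairify[OF uC] and vP = pairify[OF vC] and utP = pairify[OF ut_cont]
    and vtP = pairify[OF vt_cont]

  define p1 where "p1 = (\<lambda>s x. vb x / ub x * (u x s - ub x)^2)"
  define p2 where "p2 = (\<lambda>s x. ub x / vb x * (v x s - vb x)^2)"
  define q1 where "q1 = (\<lambda>s x. vb x / ub x * (u x s - ub x) * ut x s)"
  define q2 where "q2 = (\<lambda>s x. ub x / vb x * (v x s - vb x) * vt x s)"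
  define f where "f = (\<lambda>s x. c x * (p1 s x + p2 s x))"
  define Q where "Q = (\<lambda>s x. c x * (2 * q1 s x + 2 * q2 s x))"
  define G where "G = (\<lambda>x. c x * c x / 2 * (p2 t x - p1 t x))"

  have key: "(\<forall>x\<in>{0<..<1}. ub x > 0 \<and> vb x > 0)
    \<and> (\<forall>s>0. continuous_on {0..1} (p1 s) \<and> continuous_on {0..1} (p2 s))
    \<and> continuous_on (U \<times> {0..1}) (\<lambda>p. q1 (fst p) (snd p))
    \<and> continuous_on (U \<times> {0..1}) (\<lambda>p. q2 (fst p) (snd p))
    \<and> G 1 = G 0"
    using bc
  proof (elim disjE)
    assume P: "c 0 = c 1 \<and> ub 0 = ub 1 \<and> vb 0 = vb 1
         \<and> (\<forall>x\<in>{0..1}. ub x > 0 \<and> vb x > 0)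
         \<and> (\<forall>t>0. u 0 t = u 1 t \<and> v 0 t = v 1 t)"
    then have pos: "\<And>x. x \<in> {0..1} \<Longrightarrow> ub x > 0 \<and> vb x > 0" by auto
    have A1: "\<forall>x\<in>{0<..<1}. ub x > 0 \<and> vb x > 0" using pos by auto
    have A2: "continuous_on {0..1} (p1 s) \<and> continuous_on {0..1} (p2 s)" if "s > 0" for s
      unfolding p1_def p2_def
      by (auto intro!: continuous_intros ub_cont vb_cont ux_c vx_c that) (use pos in force)+
    have pos2: "\<And>p. p \<in> U \<times> {0..1} \<Longrightarrow> ub (snd p) \<noteq> 0 \<and> vb (snd p) \<noteq> 0"
      using pos by fastforce
    have A3: "continuous_on (U \<times> {0..1}) (\<lambda>p. q1 (fst p) (snd p))"
      unfolding q1_def using pos2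
      by (auto intro!: continuous_intros ubP vbP uP utP)
    have A4: "continuous_on (U \<times> {0..1}) (\<lambda>p. q2 (fst p) (snd p))"
      unfolding q2_def using pos2
      by (auto intro!: continuous_intros ubP vbP vP vtP)
    have A5: "G 1 = G 0" unfolding G_def p1_def p2_def using P t by auto
    show ?thesis using A1 A2 A3 A4 A5 by blast
  next
    assume D: "ub 0 = 0 \<and> vb 1 = 0
         \<and> (\<exists>m M. 0 < m \<and> m \<le> M \<and>
              (\<forall>x\<in>{0<..<1}. m \<le> ub x / x \<and> ub x / x \<le> M
                             \<and> m \<le> vb x / (1 - x) \<and> vb x / (1 - x) \<le> M))
         \<and> (\<forall>t>0. u 0 t = 0 \<and> v 1 t = 0)
         \<and> (\<exists>K. \<forall>x\<in>{0..1}. \<forall>t>0. u x t \<le> K * x \<and> v x t \<le> K * (1 - x))"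
    then have ub0: "ub 0 = 0" and vb1: "vb 1 = 0"
      and u0: "\<And>s. s > 0 \<Longrightarrow> u 0 s = 0" and v1: "\<And>s. s > 0 \<Longrightarrow> v 1 s = 0" by auto
    from D obtain m M where mM: "0 < m" "m \<le> M"
      and bnd: "\<And>x. x \<in> {0<..<1} \<Longrightarrow> m \<le> ub x / x \<and> ub x / x \<le> M
                             \<and> m \<le> vb x / (1 - x) \<and> vb x / (1 - x) \<le> M" by blast
    from D obtain K where K: "\<And>x s. x \<in> {0..1} \<Longrightarrow> s > 0 \<Longrightarrow> u x s \<le> K * x \<and> v x s \<le> K * (1 - x)"
      by blast
    have K0: "K \<ge> 0"
    proof -
      have "0 \<le> u 1 1" using nonneg by simp
      moreover have "u 1 1 \<le> K * 1" using K[of 1 1] by simp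
      ultimately show ?thesis by simp
    qed
    define L where "L = (K + M) / m"
    have L0: "L \<ge> 0" using K0 mM by (simp add: L_def)
    have ubx: "m * x \<le> ub x \<and> ub x \<le> M * x" if "x \<in> {0<..<1}" for x
      using bnd[OF that] that by (auto simp: field_simps)
    have vbx: "m * (1 - x) \<le> vb x \<and> vb x \<le> M * (1 - x)" if "x \<in> {0<..<1}" for x
      using bnd[OF that] that by (auto simp: field_simps)
    have A1: "\<forall>x\<in>{0<..<1}. ub x > 0 \<and> vb x > 0"
    proof
      fix x :: real assume x: "x \<in> {0<..<1}"
      have "m * x > 0" "m * (1 - x) > 0" using x mM by auto
      then show "ub x > 0 \<and> vb x > 0" using ubx[OF x] vbx[OF x] by linarith
    qed
    have bu: "\<bar>u x s - ub x\<bar> \<le> L * ub x" if x: "x \<in> {0<..<1}" and s: "s > 0" for x s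
    proof -
      have "0 \<le> u x s" "u x s \<le> K * x" using nonneg K[of x s] x s by auto
      moreover have "m * x \<le> ub x" "ub x \<le> M * x" using ubx[OF x] by auto
      moreover have "0 < m * x" using mM x by simp
      moreover have "(K + M) * x \<le> L * ub x"
      proof -
        have "(K + M) * x = L * (m * x)" using mM by (simp add: L_def)
        also have "\<dots> \<le> L * ub x" using L0 ubx[OF x] by (intro mult_left_mono) auto
        finally show ?thesis .
      qed
      ultimately show ?thesis by (auto simp: abs_if algebra_simps)
    qed
    have bv: "\<bar>v x s - vb x\<bar> \<le> L * vb x" if x: "x \<in> {0<..<1}" and s: "s > 0" for x s
    proof -
      have "0 \<le> v x s" "v x s \<le> K * (1 - x)" using nonneg K[of x s] x s by auto
      moreover have "m * (1 - x) \<le> vb x" "vb x \<le> M * (1 - x)" using vbx[OF x] by auto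
      moreover have "0 < m * (1 - x)" using mM x by simp
      moreover have "(K + M) * (1 - x) \<le> L * vb x"
      proof -
        have "(K + M) * (1 - x) = L * (m * (1 - x))" using mM by (simp add: L_def)
        also have "\<dots> \<le> L * vb x" using L0 vbx[OF x] by (intro mult_left_mono) auto
        finally show ?thesis .
      qed
      ultimately show ?thesis by (auto simp: abs_if algebra_simps)
    qed
    have ut0: "ut 0 s = 0" if s: "s > 0" for s
    proof -
      have "((\<lambda>s. u 0 s) has_real_derivative 0) (at s)"
        by (rule has_field_derivative_transform_within_open[OF DERIV_const, where S="{0<..}"])
           (use s u0 in auto)
      moreover have "((\<lambda>s. u 0 s) has_real_derivative ut 0 s) (at s)" using u_dt s by auto
      ultimately show ?thesis using DERIV_unique by blast
    qed
    have vt1: "vt 1 s = 0" if s: "s > 0" for s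
    proof -
      have "((\<lambda>s. v 1 s) has_real_derivative 0) (at s)"
        by (rule has_field_derivative_transform_within_open[OF DERIV_const, where S="{0<..}"])
           (use s v1 in auto)
      moreover have "((\<lambda>s. v 1 s) has_real_derivative vt 1 s) (at s)" using v_dt s by auto
      ultimately show ?thesis using DERIV_unique by blast
    qed
    have ends: "x = 0 \<or> x = 1" if "x \<in> {0..1}" "x \<notin> {0<..<1}" for x :: real
      using that by auto
    have A2: "continuous_on {0..1} (p1 s) \<and> continuous_on {0..1} (p2 s)" if s: "s > 0" for s
    proof
      show "continuous_on {0..1} (p1 s)"
      proof (rule cont_on_squeeze[where Op="{0<..<1}" and H="\<lambda>x. L^2 * (ub x * vb x)"])
        show "continuous_on {0<..<1} (p1 s)" unfolding p1_def using A1
          by (auto intro!: continuous_intros continuous_on_subset[OF ub_cont]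
                continuous_on_subset[OF vb_cont] continuous_on_subset[OF ux_c[OF s]])
        show "continuous_on {0..1} (\<lambda>x. L^2 * (ub x * vb x))"
          by (intro continuous_intros ub_cont vb_cont)
        fix y :: real assume y: "y \<in> {0..1}"
        show "\<bar>p1 s y\<bar> \<le> L^2 * (ub y * vb y)"
        proof (cases "y \<in> {0<..<1}")
          case True
          have pos: "ub y > 0" "vb y > 0" using A1 True by auto
          have "(u y s - ub y)^2 \<le> (L * ub y)^2"
            using abs_le_square_iff[of "u y s - ub y" "L * ub y"] bu[OF True s] L0 pos by simp
          then have "vb y / ub y * (u y s - ub y)^2 \<le> vb y / ub y * (L * ub y)^2"
            using pos by (intro mult_left_mono) auto
          also have "\<dots> = L^2 * (ub y * vb y)" using pos by (simp add: field_simps power2_eq_square)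
          finally show ?thesis using pos unfolding p1_def by simp
        next
          case False
          then show ?thesis using ends[OF y False] ub0 vb1 by (auto simp: p1_def)
        qed
      next
        fix y :: real assume "y \<in> {0..1}" "y \<notin> {0<..<1}"
        then show "p1 s y = 0 \<and> L^2 * (ub y * vb y) = 0" using ends ub0 vb1 by (auto simp: p1_def)
      qed auto
      show "continuous_on {0..1} (p2 s)"
      proof (rule cont_on_squeeze[where Op="{0<..<1}" and H="\<lambda>x. L^2 * (ub x * vb x)"])
        show "continuous_on {0<..<1} (p2 s)" unfolding p2_def using A1
          by (auto intro!: continuous_intros continuous_on_subset[OF ub_cont]
                continuous_on_subset[OF vb_cont] continuous_on_subset[OF vx_c[OF s]])
        show "continuous_on {0..1} (\<lambda>x. L^2 * (ub x * vb x))"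
          by (intro continuous_intros ub_cont vb_cont)
        fix y :: real assume y: "y \<in> {0..1}"
        show "\<bar>p2 s y\<bar> \<le> L^2 * (ub y * vb y)"
        proof (cases "y \<in> {0<..<1}")
          case True
          have pos: "ub y > 0" "vb y > 0" using A1 True by auto
          have "(v y s - vb y)^2 \<le> (L * vb y)^2"
            using abs_le_square_iff[of "v y s - vb y" "L * vb y"] bv[OF True s] L0 pos by simp
          then have "ub y / vb y * (v y s - vb y)^2 \<le> ub y / vb y * (L * vb y)^2"
            using pos by (intro mult_left_mono) auto
          also have "\<dots> = L^2 * (ub y * vb y)" using pos by (simp add: field_simps power2_eq_square)
          finally show ?thesis using pos unfolding p2_def by simp
        next
          case False
          then show ?thesis using ends[OF y False] ub0 vb1 by (auto simp: p2_def)
        qed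
      next
        fix y :: real assume "y \<in> {0..1}" "y \<notin> {0<..<1}"
        then show "p2 s y = 0 \<and> L^2 * (ub y * vb y) = 0" using ends ub0 vb1 by (auto simp: p2_def)
      qed auto
    qed
    have openOp: "open (U \<times> {0<..<(1::real)})" using openU by (intro open_Times) auto
    have subOp: "U \<times> {0<..<(1::real)} \<subseteq> U \<times> {0..1}" by auto
    have pos2: "\<And>p. p \<in> U \<times> {0<..<1} \<Longrightarrow> ub (snd p) \<noteq> 0 \<and> vb (snd p) \<noteq> 0"
      using A1 by fastforce
    have A3: "continuous_on (U \<times> {0..1}) (\<lambda>p. q1 (fst p) (snd p))"
    proof (rule cont_on_squeeze[OF openOp subOp, where H="\<lambda>p. L * (vb (snd p) * \<bar>ut (snd p) (fst p)\<bar>)"])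
      show "continuous_on (U \<times> {0<..<1}) (\<lambda>p. q1 (fst p) (snd p))" unfolding q1_def using pos2
        by (auto intro!: continuous_intros continuous_on_subset[OF ubP subOp]
            continuous_on_subset[OF vbP subOp] continuous_on_subset[OF uP subOp]
            continuous_on_subset[OF utP subOp])
      show "continuous_on (U \<times> {0..1}) (\<lambda>p. L * (vb (snd p) * \<bar>ut (snd p) (fst p)\<bar>))"
        by (intro continuous_intros vbP utP)
    next
      fix p :: "real \<times> real" assume p: "p \<in> U \<times> {0..1}"
      obtain s y where py: "p = (s, y)" by (cases p)
      have s: "s > 0" and y: "y \<in> {0..1}" using p py U_pos by auto
      show "\<bar>q1 (fst p) (snd p)\<bar> \<le> L * (vb (snd p) * \<bar>ut (snd p) (fst p)\<bar>)"
      proof (cases "y \<in> {0<..<1}")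
        case True
        have pos: "ub y > 0" "vb y > 0" using A1 True by auto
        have "\<bar>q1 s y\<bar> = vb y / ub y * \<bar>u y s - ub y\<bar> * \<bar>ut y s\<bar>"
          using pos by (simp add: q1_def abs_mult)
        also have "\<dots> \<le> vb y / ub y * (L * ub y) * \<bar>ut y s\<bar>"
          using pos bu[OF True s] by (intro mult_right_mono mult_left_mono) auto
        also have "\<dots> = L * (vb y * \<bar>ut y s\<bar>)" using pos by (simp add: field_simps)
        finally show ?thesis using py by simp
      next
        case False
        then have "y = 0 \<or> y = 1" using ends[OF y] by auto
        then show ?thesis using py ub0 vb1 ut0[OF s] L0 by (auto simp: q1_def)
      qed
    next
      fix p :: "real \<times> real" assume p: "p \<in> U \<times> {0..1}" "p \<notin> U \<times> {0<..<1}"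
      obtain s y where py: "p = (s, y)" by (cases p)
      have s: "s > 0" and y: "y \<in> {0..1}" "y \<notin> {0<..<1}" using p py U_pos by auto
      then have "y = 0 \<or> y = 1" using ends by auto
      then show "q1 (fst p) (snd p) = 0 \<and> L * (vb (snd p) * \<bar>ut (snd p) (fst p)\<bar>) = 0"
        using py ub0 vb1 ut0[OF s] by (auto simp: q1_def)
    qed
    have A4: "continuous_on (U \<times> {0..1}) (\<lambda>p. q2 (fst p) (snd p))"
    proof (rule cont_on_squeeze[OF openOp subOp, where H="\<lambda>p. L * (ub (snd p) * \<bar>vt (snd p) (fst p)\<bar>)"])
      show "continuous_on (U \<times> {0<..<1}) (\<lambda>p. q2 (fst p) (snd p))" unfolding q2_def using pos2
        by (auto intro!: continuous_intros continuous_on_subset[OF ubP subOp]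
            continuous_on_subset[OF vbP subOp] continuous_on_subset[OF vP subOp]
            continuous_on_subset[OF vtP subOp])
      show "continuous_on (U \<times> {0..1}) (\<lambda>p. L * (ub (snd p) * \<bar>vt (snd p) (fst p)\<bar>))"
        by (intro continuous_intros ubP vtP)
    next
      fix p :: "real \<times> real" assume p: "p \<in> U \<times> {0..1}"
      obtain s y where py: "p = (s, y)" by (cases p)
      have s: "s > 0" and y: "y \<in> {0..1}" using p py U_pos by auto
      show "\<bar>q2 (fst p) (snd p)\<bar> \<le> L * (ub (snd p) * \<bar>vt (snd p) (fst p)\<bar>)"
      proof (cases "y \<in> {0<..<1}")
        case True
        have pos: "ub y > 0" "vb y > 0" using A1 True by auto
        have "\<bar>q2 s y\<bar> = ub y / vb y * \<bar>v y s - vb y\<bar> * \<bar>vt y s\<bar>"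
          using pos by (simp add: q2_def abs_mult)
        also have "\<dots> \<le> ub y / vb y * (L * vb y) * \<bar>vt y s\<bar>"
          using pos bv[OF True s] by (intro mult_right_mono mult_left_mono) auto
        also have "\<dots> = L * (ub y * \<bar>vt y s\<bar>)" using pos by (simp add: field_simps)
        finally show ?thesis using py by simp
      next
        case False
        then have "y = 0 \<or> y = 1" using ends[OF y] by auto
        then show ?thesis using py ub0 vb1 vt1[OF s] L0 by (auto simp: q2_def)
      qed
    next
      fix p :: "real \<times> real" assume p: "p \<in> U \<times> {0..1}" "p \<notin> U \<times> {0<..<1}"
      obtain s y where py: "p = (s, y)" by (cases p)
      have s: "s > 0" and y: "y \<in> {0..1}" "y \<notin> {0<..<1}" using p py U_pos by auto
      then have "y = 0 \<or> y = 1" using ends by auto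
      then show "q2 (fst p) (snd p) = 0 \<and> L * (ub (snd p) * \<bar>vt (snd p) (fst p)\<bar>) = 0"
        using py ub0 vb1 vt1[OF s] by (auto simp: q2_def)
    qed
    have A5: "G 1 = G 0" unfolding G_def p1_def p2_def using ub0 vb1 by simp
    show ?thesis using A1 A2 A3 A4 A5 by blast
  qed
  then have pos_int: "\<And>x. x \<in> {0<..<1} \<Longrightarrow> ub x > 0 \<and> vb x > 0"
    and p_cont: "\<And>s. s > 0 \<Longrightarrow> continuous_on {0..1} (p1 s) \<and> continuous_on {0..1} (p2 s)"
    and q1_cont: "continuous_on (U \<times> {0..1}) (\<lambda>p. q1 (fst p) (snd p))"
    and q2_cont: "continuous_on (U \<times> {0..1}) (\<lambda>p. q2 (fst p) (snd p))"
    and Gend: "G 1 = G 0" by auto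
  have fder: "((\<lambda>s. f s x) has_field_derivative Q s x) (at s within U)"
    if s: "s \<in> U" and x: "x \<in> cbox 0 1" for s x :: real
  proof -
    have x01: "x \<in> {0..1}" using x by (simp add: cbox_interval)
    have s0: "s > 0" using U_pos s by simp
    have du: "((\<lambda>s. u x s) has_real_derivative ut x s) (at s)" using u_dt x01 s0 by auto
    have dv: "((\<lambda>s. v x s) has_real_derivative vt x s) (at s)" using v_dt x01 s0 by auto
    have d: "((\<lambda>s. c x * (vb x / ub x * (u x s - ub x)^2 + ub x / vb x * (v x s - vb x)^2)) has_real_derivative
         c x * (vb x / ub x * (of_nat 2 * ((ut x s - 0) * (u x s - ub x) ^ (2 - Suc 0)))
              + ub x / vb x * (of_nat 2 * ((vt x s - 0) * (v x s - vb x) ^ (2 - Suc 0))))) (at s)"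
      by (intro DERIV_cmult DERIV_add DERIV_power DERIV_diff du dv DERIV_const)
    have "((\<lambda>s. c x * (vb x / ub x * (u x s - ub x)^2 + ub x / vb x * (v x s - vb x)^2)) has_real_derivative
         Q s x) (at s)"
      by (rule DERIV_cong[OF d]) (simp add: Q_def q1_def q2_def algebra_simps)
    then have "((\<lambda>s. f s x) has_real_derivative Q s x) (at s)"
      by (simp add: f_def p1_def p2_def)
    then show ?thesis by (rule has_field_derivative_at_within)
  qed
  have fint: "f s integrable_on cbox 0 1" if s: "s \<in> U" for s
  proof -
    have "continuous_on {0..1} (f s)" unfolding f_def using p_cont[OF U_pos[OF s]]
      by (auto intro!: continuous_intros c_cont)
    then show ?thesis unfolding cbox_interval by (rule integrable_continuous_interval)
  qed
  have QcontP: "continuous_on (U \<times> {0..1}) (\<lambda>p. Q (fst p) (snd p))"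
    unfolding Q_def by (intro continuous_intros cP q1_cont q2_cont)
  have Qcont: "continuous_on (U \<times> cbox 0 1) (\<lambda>(s, x). Q s x)"
    using QcontP unfolding cbox_interval case_prod_beta' .
  have LR: "((\<lambda>s. integral (cbox 0 1) (f s)) has_field_derivative integral (cbox 0 1) (Q t)) (at t within U)"
    by (rule leibniz_rule_field_derivative[OF fder fint Qcont tU convU])
  then have LR': "((\<lambda>s. integral (cbox 0 1) (f s)) has_field_derivative integral (cbox 0 1) (Q t)) (at t)"
    using at_within_open[OF tU openU] by simp
  have Heq: "(\<lambda>s. Hfun c ub vb (\<lambda>x. u x s) (\<lambda>x. v x s)) = (\<lambda>s. 1/2 * integral (cbox 0 1) (f s))"
    by (simp add: Hfun_def f_def p1_def p2_def cbox_interval)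
  have HD: "((\<lambda>s. Hfun c ub vb (\<lambda>x. u x s) (\<lambda>x. v x s)) has_real_derivative
              1/2 * integral (cbox 0 1) (Q t)) (at t)"
    unfolding Heq by (rule DERIV_cmult[OF LR'])

  define Bt where "Bt = (\<lambda>x. c x * Jfun (u x t) (v x t) (ub x) (vb x)
                       / ((1 + u x t + v x t) * (1 + ub x + vb x)))"
  define D where "D = (\<lambda>x. Q t x / 2 + \<alpha> / 2 * Bt x)"
  have Gcont: "continuous_on {0..1} G" unfolding G_def using p_cont[OF t]
    by (auto intro!: continuous_intros c_cont)
  have Gder: "(G has_vector_derivative D x) (at x)" if x: "x \<in> {0<..<1}" for x
  proof -
    have pos: "ub x > 0" "vb x > 0" using pos_int[OF x] by auto
    have x01: "x \<in> {0..1}" using x by auto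
    have cx: "c x > 0" using c_pos x01 by auto
    have atx: "at x within {0..1} = at x" using x by (simp add: at_within_Icc_at)
    have "(c has_real_derivative c' x) (at x within {0..1})" using c_deriv x01 by auto
    then have dc: "(c has_real_derivative c' x) (at x)" using atx by simp
    have "(ub has_real_derivative ub' x) (at x within {0..1})" using ub_deriv x01 by auto
    then have dub: "(ub has_real_derivative ub' x) (at x)" using atx by simp
    have "(vb has_real_derivative vb' x) (at x within {0..1})" using vb_deriv x01 by auto
    then have dvb: "(vb has_real_derivative vb' x) (at x)" using atx by simp
    have "((\<lambda>y. u y t) has_real_derivative ux x t) (at x within {0..1})" using u_dx x01 t by auto
    then have du: "((\<lambda>y. u y t) has_real_derivative ux x t) (at x)" using atx by simp
    have "((\<lambda>y. v y t) has_real_derivative vx x t) (at x within {0..1})" using v_dx x01 t by auto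
    then have dv: "((\<lambda>y. v y t) has_real_derivative vx x t) (at x)" using atx by simp
    have GD: "(G has_real_derivative Eg (c x) (c' x) (ub x) (ub' x) (vb x) (vb' x) (u x t) (ux x t) (v x t) (vx x t)) (at x)"
      unfolding G_def p1_def p2_def by (rule G_deriv[OF dc dub dvb du dv]) (use pos in auto)
    have nn: "u x t \<ge> 0" "v x t \<ge> 0" using nonneg x01 t by auto
    have E: "c x * (vb x / ub x * (u x t - ub x) * ut x t + ub x / vb x * (v x t - vb x) * vt x t)
         + (\<alpha> / 2) * (c x * Jfun (u x t) (v x t) (ub x) (vb x) / ((1 + u x t + v x t) * (1 + ub x + vb x)))
         = Eg (c x) (c' x) (ub x) (ub' x) (vb x) (vb' x) (u x t) (ux x t) (v x t) (vx x t)"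
    proof (rule alg)
      show "c x \<noteq> 0" "ub x \<noteq> 0" "vb x \<noteq> 0" "1 + u x t + v x t \<noteq> 0" "1 + ub x + vb x \<noteq> 0"
        using cx pos nn by auto
      show "c' x * ub x + c x * ub' x = \<alpha> * vb x / (1 + ub x + vb x) - ub x" using stat_u x01 by auto
      show "- (c' x * vb x + c x * vb' x) = \<alpha> * ub x / (1 + ub x + vb x) - vb x" using stat_v x01 by auto
      show "ut x t + (c' x * u x t + c x * ux x t) = \<alpha> * v x t / (1 + u x t + v x t) - u x t"
        using eq_u x01 t by auto
      show "vt x t - (c' x * v x t + c x * vx x t) = \<alpha> * u x t / (1 + u x t + v x t) - v x t"
        using eq_v x01 t by auto
    qed
    have "D x = Eg (c x) (c' x) (ub x) (ub' x) (vb x) (vb' x) (u x t) (ux x t) (v x t) (vx x t)"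
    proof -
      have Qh: "Q t x / 2 = c x * (vb x / ub x * (u x t - ub x) * ut x t + ub x / vb x * (v x t - vb x) * vt x t)"
        unfolding Q_def q1_def q2_def by (simp add: distrib_left[symmetric] mult.commute)
      show ?thesis unfolding E[symmetric] D_def Qh Bt_def by simp
    qed
    then show ?thesis using GD by (simp add: has_real_derivative_iff_has_vector_derivative)
  qed
  have FTC: "(D has_integral G 1 - G 0) {0..1}"
    by (rule fundamental_theorem_of_calculus_interior[OF _ Gcont Gder]) auto
  then have D0: "(D has_integral 0) {0..1}" using Gend by simp
  have "continuous_on {0..1} (\<lambda>x. (\<lambda>p. Q (fst p) (snd p)) (t, x))"
    by (rule continuous_on_compose2[OF QcontP]) (auto intro!: continuous_intros simp: tU)
  then have "continuous_on {0..1} (Q t)" by simp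
  then have Qint: "(Q t) integrable_on {0..1}" by (rule integrable_continuous_interval)
  have Q2: "((\<lambda>x. Q t x / 2) has_integral integral {0..1} (Q t) / 2) {0..1}"
    by (rule has_integral_divide[OF integrable_integral[OF Qint]])
  have "((\<lambda>x. D x - Q t x / 2) has_integral (0 - integral {0..1} (Q t) / 2)) {0..1}"
    by (rule has_integral_diff[OF D0 Q2])
  moreover have "(\<lambda>x. D x - Q t x / 2) = (\<lambda>x. \<alpha> / 2 * Bt x)" by (simp add: D_def fun_eq_iff)
  ultimately have "((\<lambda>x. \<alpha> / 2 * Bt x) has_integral (0 - integral {0..1} (Q t) / 2)) {0..1}" by simp
  then have "(Bt has_integral (0 - integral {0..1} (Q t) / 2) / (\<alpha> / 2)) {0..1}"
  proof -
    have a2: "\<alpha> / 2 \<noteq> 0" using alpha_pos by simp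
    show ?thesis using has_integral_mult_right_iff[OF a2, of Bt] \<open>((\<lambda>x. \<alpha> / 2 * Bt x) has_integral (0 - integral {0..1} (Q t) / 2)) {0..1}\<close>
      by blast
  qed
  then have IB: "integral {0..1} Bt = (0 - integral {0..1} (Q t) / 2) / (\<alpha> / 2)"
    by (rule integral_unique)
  have eq: "- (\<alpha> / 2) * integral {0..1} Bt = 1/2 * integral (cbox 0 1) (Q t)"
    using IB alpha_pos by (simp add: cbox_interval field_simps)
  have "((\<lambda>s. Hfun c ub vb (\<lambda>x. u x s) (\<lambda>x. v x s)) has_real_derivative
            (- (\<alpha> / 2) * integral {0..1} Bt)) (at t)"
    by (subst eq) (rule HD)
  then show "((\<lambda>s. Hfun c ub vb (\<lambda>x. u x s) (\<lambda>x. v x s)) has_real_derivative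
            (- (\<alpha> / 2) * integral {0..1}
                 (\<lambda>x. c x * Jfun (u x t) (v x t) (ub x) (vb x)
                       / ((1 + u x t + v x t) * (1 + ub x + vb x))))) (at t)"
    unfolding Bt_def .
qed

end
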